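(* Let ${\cal X}$ be a real Hilbert space, $M\in\mathbb{N}_0$ and $\kappa_1,\kappa_2>0$. For all $j\in\{1,\dots,M\}$ let $(s_j,y_j)\in{\cal X}\times{\cal X}$ satisfy $$\frac{y_j^Ts_j}{\|s_j\|^2}\ge\frac1{\kappa_1}\qquad\text{and}\qquad\frac{y_j^Ts_j}{\|y_j\|^2}\ge\frac1{\kappa_2}.$$ Let $B^{(0)}\in\mathcal{L}_+({\cal X})$, set $B_0:=B^{(0)}$ and $$B_j:=B_{j-1}+\frac{y_jy_j^T}{y_j^Ts_j}-\frac{B_{j-1}s_js_j^TB_{j-1}}{s_j^TB_{j-1}s_j},\qquad j=1,\dots,M,$$ and $B:=B_M$. Then $B\in\mathcal{L}_+({\cal X})$, $$\|B\|\le\|B^{(0)}\|+M\kappa_2,$$ and $$\|B^{-1}\|\le5^M\max\{1,\|(B^{(0)})^{-1}\|\}\max\{1,\kappa_1^M,(\kappa_1\kappa_2)^M\}.$$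
   Context: ${\cal X}$ is a real Hilbert space with inner product written $x^Ty$ and induced norm $\|\cdot\|$; for $u,v\in{\cal X}$, $uv^T$ denotes the operator $w\mapsto u\,(v^Tw)$. $\mathcal{L}({\cal X})$ is the space of bounded linear operators on ${\cal X}$ and $\mathcal{L}_+({\cal X})$ the set of self-adjoint positive definite operators in $\mathcal{L}({\cal X})$. Operator norms are the induced norms. *)

theory Defs
  imports "HOL-Analysis.Analysis"
begin

definition rank1 :: "'a::real_inner \<Rightarrow> 'a \<Rightarrow> ('a \<Rightarrow>\<^sub>L 'a)" where
  "rank1 u v = Blinfun (\<lambda>w. (v \<bullet> w) *\<^sub>R u)"

text \<open>Self-adjoint positive definite bounded operators (positive definite in the
  Hilbert-space sense: uniformly positive, x^T A x \<ge> c ||x||^2 with c > 0).\<close>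
definition Lplus :: "('a::{real_inner,complete_space} \<Rightarrow>\<^sub>L 'a) set" where
  "Lplus = {A. (\<forall>x y. (blinfun_apply A x) \<bullet> y = x \<bullet> (blinfun_apply A y)) \<and>
               (\<exists>c>0. \<forall>x. x \<bullet> (blinfun_apply A x) \<ge> c * (norm x)\<^sup>2)}"

definition blinfun_inv :: "('a::real_normed_vector \<Rightarrow>\<^sub>L 'a) \<Rightarrow> ('a \<Rightarrow>\<^sub>L 'a)" where
  "blinfun_inv A = (SOME C. A o\<^sub>L C = id_blinfun \<and> C o\<^sub>L A = id_blinfun)"

fun bfgs_seq :: "('a::real_inner \<Rightarrow>\<^sub>L 'a) \<Rightarrow> (nat \<Rightarrow> 'a) \<Rightarrow> (nat \<Rightarrow> 'a) \<Rightarrow> nat \<Rightarrow> ('a \<Rightarrow>\<^sub>L 'a)" where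
  "bfgs_seq B0 s y 0 = B0"
| "bfgs_seq B0 s y (Suc j) =
     (let Bp = bfgs_seq B0 s y j; sj = s (Suc j); yj = y (Suc j) in
        Bp + (1 / (yj \<bullet> sj)) *\<^sub>R rank1 yj yj
           - (1 / (sj \<bullet> blinfun_apply Bp sj)) *\<^sub>R (rank1 (blinfun_apply Bp sj) sj o\<^sub>L Bp))"

end

theory Submission
  imports Defs
begin


lemma rank1_apply[simp]: "blinfun_apply (rank1 u v) w = (v \<bullet> w) *\<^sub>R u"
  unfolding rank1_def
  by (subst bounded_linear_Blinfun_apply) (auto intro!: bounded_linear_intros)

lemma seq_apply:
  "blinfun_apply (bfgs_seq B0 s y (Suc j)) x =
     blinfun_apply (bfgs_seq B0 s y j) x
     + ((y (Suc j) \<bullet> x) / (y (Suc j) \<bullet> s (Suc j))) *\<^sub>R y (Suc j)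
     - ((s (Suc j) \<bullet> blinfun_apply (bfgs_seq B0 s y j) x) / (s (Suc j) \<bullet> blinfun_apply (bfgs_seq B0 s y j) (s (Suc j)))) *\<^sub>R blinfun_apply (bfgs_seq B0 s y j) (s (Suc j))"
  by (simp add: Let_def blinfun.bilinear_simps)

lemma psd_cs:
  fixes A :: "'a::real_inner \<Rightarrow>\<^sub>L 'a"
  assumes sym: "\<And>x w. A x \<bullet> w = x \<bullet> A w" and psd: "\<And>x. 0 \<le> x \<bullet> A x"
  shows "(w \<bullet> A x)^2 \<le> (w \<bullet> A w) * (x \<bullet> A x)"
proof -
  define b where "b = w \<bullet> A x"
  define c where "c = w \<bullet> A w"
  define a where "a = x \<bullet> A x"
  have q: "0 \<le> a + 2*t*b + t^2*c" for t
  proof -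
    have "0 \<le> (x + t *\<^sub>R w) \<bullet> A (x + t *\<^sub>R w)" by (rule psd)
    also have "\<dots> = a + 2*t*b + t^2*c"
      using sym[of w x] unfolding a_def b_def c_def
      by (simp add: blinfun.bilinear_simps inner_add_left inner_add_right power2_eq_square algebra_simps inner_commute)
    finally show ?thesis .
  qed
  show ?thesis
  proof (cases "c = 0")
    case True
    show ?thesis
    proof (cases "b = 0")
      case True then show ?thesis using psd[of w] psd[of x] by (simp add: b_def)
    next
      case False
      have "0 \<le> a + 2*(-(a+1)/(2*b))*b" using q[of "-(a+1)/(2*b)"] True \<open>c=0\<close> by simp
      also have "\<dots> = -1" using False by (simp add: field_simps)
      finally show ?thesis by simp
    qed
  next
    case False
    have c0: "c > 0" using psd[of w] False c_def by simp
    have "0 \<le> a + 2*(-b/c)*b + (-b/c)^2*c" by (rule q)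
    also have "\<dots> = a - b^2/c" using False by (simp add: field_simps power2_eq_square)
    finally have "b^2/c \<le> a" by simp
    then have "b^2 \<le> a * c" using c0 by (simp add: field_simps)
    then show ?thesis by (simp add: a_def b_def c_def mult.commute)
  qed
qed

lemma psd_norm_bound:
  fixes A :: "'a::real_inner \<Rightarrow>\<^sub>L 'a"
  assumes sym: "\<And>x w. A x \<bullet> w = x \<bullet> A w" and psd: "\<And>x. 0 \<le> x \<bullet> A x"
    and ub: "\<And>x. x \<bullet> A x \<le> K * (norm x)^2" and K: "0 \<le> K"
  shows "norm A \<le> K"
proof (rule norm_blinfun_bound[OF K])
  fix x
  have "(norm (A x))^2 \<le> K * norm x * norm (A x)"
  proof (cases "A x = 0")
    case True then show ?thesis by simp
  next
    case False
    have "((norm (A x))^2)^2 = (A x \<bullet> A x)^2" by (simp add: power2_norm_eq_inner)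
    also have "\<dots> \<le> (A x \<bullet> A (A x)) * (x \<bullet> A x)" by (rule psd_cs[OF sym psd])
    also have "\<dots> \<le> (K * (norm (A x))^2) * (K * (norm x)^2)"
      by (intro mult_mono ub psd) (auto intro: order_trans[OF psd ub])
    finally have "((norm (A x))^2)^2 \<le> (K * norm x * norm (A x))^2"
      by (simp add: power2_eq_square algebra_simps)
    then show ?thesis
      by (rule power2_le_imp_le) (use K in simp)
  qed
  then show "norm (A x) \<le> K * norm x"
    by (cases "A x = 0") (auto simp: power2_eq_square K)
qed

lemma inv_lemma:
  fixes B :: "'a::{real_inner,complete_space} \<Rightarrow>\<^sub>L 'a"
  assumes sym: "\<And>x w. B x \<bullet> w = x \<bullet> B w"
    and lb: "\<And>x. (norm x)^2 \<le> H * (x \<bullet> B x)" and H: "H > 0"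
  shows "B o\<^sub>L blinfun_inv B = id_blinfun \<and> blinfun_inv B o\<^sub>L B = id_blinfun \<and> norm (blinfun_inv B) \<le> H"
proof -
  have psd: "0 \<le> x \<bullet> B x" for x
    using lb[of x] H by (metis zero_le_power2 order_trans zero_le_mult_iff not_le)
  have below: "norm x \<le> H * norm (B x)" for x
  proof (cases "x = 0")
    case True then show ?thesis by simp
  next
    case False
    have "(norm x)^2 \<le> H * (x \<bullet> B x)" by (rule lb)
    also have "\<dots> \<le> H * (norm x * norm (B x))"
      using H by (intro mult_left_mono norm_cauchy_schwarz) auto
    finally have "norm x * norm x \<le> norm x * (H * norm (B x))" by (simp add: power2_eq_square algebra_simps)
    then show ?thesis using False by simp
  qed
  have inj: "inj (blinfun_apply B)"
  proof (rule injI)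
    fix x x' assume "B x = B x'"
    then have "B (x - x') = 0" by (simp add: blinfun.diff_right)
    then show "x = x'" using below[of "x - x'"] by simp
  qed
  define N where "N = norm B"
  define t where "t = 1 / (H * (N^2 + 1))"
  have "0 < N^2 + 1" by (simp add: add_nonneg_pos)
  then have "0 < H*(N^2+1)" using H by (intro mult_pos_pos)
  then have t: "t > 0" by (simp add: t_def)
  define q where "q = 1 - 2*t/H + t^2*N^2"
  have q1: "q < 1"
  proof -
    have n2: "0 < N^2 + 1" by (simp add: add_nonneg_pos)
    have "N^2/(N^2+1) < 2" using n2 by (simp add: divide_less_eq)
    then have "(N^2/(N^2+1))/H < 2/H" using H by (rule divide_strict_right_mono)
    moreover have "t*N^2 = (N^2/(N^2+1))/H" by (simp add: t_def)
    ultimately have "t * N^2 < 2 / H" by simp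
    then have "t*(t * N^2) < t*(2 / H)" using t by (rule mult_strict_left_mono)
    then have "t^2 * N^2 < 2*t/H" by (simp add: power2_eq_square mult_ac)
    then show ?thesis by (simp add: q_def)
  qed
  define c where "c = sqrt (max q 0)"
  have c0: "0 \<le> c" and c1: "c < 1" using q1 by (auto simp: c_def)
  have contr: "norm (d - t *\<^sub>R B d) \<le> c * norm d" for d
  proof -
    have "(norm (d - t *\<^sub>R B d))^2 = (norm d)^2 - 2*t*(d \<bullet> B d) + t^2 * (norm (B d))^2"
      unfolding power2_norm_eq_inner by (simp add: inner_diff_left inner_diff_right algebra_simps inner_commute power2_eq_square)
    also have "\<dots> \<le> (norm d)^2 - 2*t*((norm d)^2/H) + t^2 * (N * norm d)^2"
    proof -
      have "(norm d)^2/H \<le> d \<bullet> B d" using lb[of d] H by (simp add: field_simps)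
      moreover have "(norm (B d))^2 \<le> (N * norm d)^2"
        unfolding N_def by (intro power_mono norm_blinfun) simp
      ultimately show ?thesis using t by (intro add_mono diff_mono mult_left_mono) auto
    qed
    also have "\<dots> = q * (norm d)^2" by (simp add: q_def field_simps power2_eq_square)
    also have "\<dots> \<le> max q 0 * (norm d)^2" by (intro mult_right_mono) auto
    finally have "(norm (d - t *\<^sub>R B d))^2 \<le> max q 0 * (norm d)^2" .
    then have "sqrt ((norm (d - t *\<^sub>R B d))^2) \<le> sqrt (max q 0 * (norm d)^2)"
      by (rule real_sqrt_le_mono)
    then show ?thesis by (simp add: c_def real_sqrt_mult)
  qed
  have surj: "surj (blinfun_apply B)"
  proof -
    have "\<exists>x. B x = b" for b
    proof -
      define f where "f x = x - t *\<^sub>R (B x - b)" for x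
      have "\<forall>x x'. dist (f x) (f x') \<le> c * dist x x'"
      proof (intro allI)
        fix x x'
        have "f x - f x' = (x - x') - t *\<^sub>R B (x - x')"
          by (simp add: f_def blinfun.diff_right algebra_simps)
        then show "dist (f x) (f x') \<le> c * dist x x'"
          using contr[of "x - x'"] by (simp add: dist_norm)
      qed
      then obtain x where "f x = x" using banach_fix_type[OF c0 c1] by blast
      then have "t *\<^sub>R (B x - b) = 0" by (simp add: f_def)
      then show ?thesis using t by auto
    qed
    then show ?thesis by (metis surjI)
  qed
  define g where "g = inv (blinfun_apply B)"
  have Bg: "B (g b) = b" for b using surj by (simp add: g_def surj_f_inv_f)
  have gB: "g (B x) = x" for x using inj by (simp add: g_def)
  have bl: "bounded_linear g"
  proof (rule bounded_linear_intro[where K = H])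
    fix a b show "g (a + b) = g a + g b"
      by (metis Bg blinfun.add_right gB)
  next
    fix r a show "g (r *\<^sub>R a) = r *\<^sub>R g a"
      by (metis Bg blinfun.scaleR_right gB)
  next
    fix a show "norm (g a) \<le> norm a * H"
      using below[of "g a"] by (simp add: Bg mult.commute)
  qed
  define C where "C = Blinfun g"
  have Capp: "blinfun_apply C = g" using bl by (simp add: C_def bounded_linear_Blinfun_apply)
  have BC: "B o\<^sub>L C = id_blinfun" by (rule blinfun_eqI) (simp add: Capp Bg)
  have CB: "C o\<^sub>L B = id_blinfun" by (rule blinfun_eqI) (simp add: Capp gB)
  have ex: "\<exists>C. B o\<^sub>L C = id_blinfun \<and> C o\<^sub>L B = id_blinfun" using BC CB by blast
  have inv: "B o\<^sub>L blinfun_inv B = id_blinfun \<and> blinfun_inv B o\<^sub>L B = id_blinfun"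
    unfolding blinfun_inv_def by (rule someI_ex[OF ex])
  have "blinfun_inv B = C"
  proof (rule blinfun_eqI)
    fix b
    have "B (blinfun_inv B b) = b" using inv by (metis blinfun_apply_blinfun_compose blinfun_apply_id_blinfun)
    then show "blinfun_inv B b = C b" by (metis Capp gB)
  qed
  moreover have "norm C \<le> H"
    using H by (intro norm_blinfun_bound) (auto simp: Capp intro: order_trans[OF below] simp: Bg)
  ultimately show ?thesis using inv by simp
qed



lemma cs_weighted:
  fixes A Bv P Q :: real assumes "P > 0" "Q > 0"
  shows "(A + Bv)^2 \<le> (P + Q) * (A^2/P + Bv^2/Q)"
proof -
  have "(P+Q)*(A^2/P + Bv^2/Q) - (A+Bv)^2 = (Q*A - P*Bv)^2/(P*Q)"
    using assms by (simp add: field_simps power2_eq_square)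
  also have "\<dots> \<ge> 0" using assms by simp
  finally show ?thesis by simp
qed

lemma step:
  fixes B :: "'a::real_inner \<Rightarrow>\<^sub>L 'a" and s y x :: 'a and \<kappa>1 \<kappa>2 h :: real
  assumes k1: "\<kappa>1 > 0" and k2: "\<kappa>2 > 0"
    and c1: "(y \<bullet> s) / (norm s)^2 \<ge> 1 / \<kappa>1"
    and c2: "(y \<bullet> s) / (norm y)^2 \<ge> 1 / \<kappa>2"
    and sym: "\<And>x w. B x \<bullet> w = x \<bullet> B w"
    and lb: "\<And>x. (norm x)^2 \<le> h * (x \<bullet> B x)" and h: "h > 0"
  shows "x \<bullet> B x + (y \<bullet> x)^2/(y \<bullet> s) - (s \<bullet> B x)^2/(s \<bullet> B s) \<le> x \<bullet> B x + \<kappa>2 * (norm x)^2"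
    and "0 \<le> x \<bullet> B x + (y \<bullet> x)^2/(y \<bullet> s) - (s \<bullet> B x)^2/(s \<bullet> B s)"
    and "(norm x)^2 \<le> (\<kappa>1 + (2 + 2*\<kappa>1*\<kappa>2)*h) * (x \<bullet> B x + (y \<bullet> x)^2/(y \<bullet> s) - (s \<bullet> B x)^2/(s \<bullet> B s))"
proof -
  define r where "r = y \<bullet> s"
  have s0: "s \<noteq> 0" using c1 k1 by auto
  have y0: "y \<noteq> 0" using c2 k2 by auto
  have ns: "(norm s)^2 > 0" using s0 by simp
  have ny: "(norm y)^2 > 0" using y0 by simp
  have i1: "1/\<kappa>1 \<le> r/(norm s)^2" using c1 by (simp add: r_def)
  have i2: "1/\<kappa>2 \<le> r/(norm y)^2" using c2 by (simp add: r_def)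
  have "0 < 1/\<kappa>1" using k1 by simp
  then have "0 < r/(norm s)^2" using i1 by linarith
  then have r: "r > 0" using ns by (simp add: zero_less_divide_iff)
  have Ps: "(norm s)^2 / r \<le> \<kappa>1"
    using i1 k1 ns r by (simp add: divide_le_eq le_divide_eq mult.commute)
  have Py: "(norm y)^2 / r \<le> \<kappa>2"
    using i2 k2 ny r by (simp add: divide_le_eq le_divide_eq mult.commute)
  define a where "a = s \<bullet> B s"
  have "0 < h * a" using lb[of s] ns unfolding a_def by linarith
  then have a: "a > 0" using h by (simp add: zero_less_mult_iff)
  have psd: "0 \<le> w \<bullet> B w" for w
  proof -
    have "0 \<le> h * (w \<bullet> B w)" using lb[of w] zero_le_power2[of "norm w"] by linarith
    then show ?thesis using h by (simp add: zero_le_mult_iff)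
  qed
  define \<alpha> where "\<alpha> = (s \<bullet> B x) / a"
  define z where "z = x - \<alpha> *\<^sub>R s"
  have xs: "x \<bullet> B s = s \<bullet> B x" using sym[of x s] by (simp add: inner_commute)
  have zBz: "z \<bullet> B z = x \<bullet> B x - (s \<bullet> B x)^2 / a"
  proof -
    have "z \<bullet> B z = x \<bullet> B x - \<alpha> * (x \<bullet> B s) - \<alpha> * (s \<bullet> B x) + \<alpha>^2 * a"
      unfolding z_def a_def
      by (simp add: blinfun.bilinear_simps inner_diff_left inner_diff_right power2_eq_square algebra_simps)
    also have "\<dots> = x \<bullet> B x - (s \<bullet> B x)^2 / a"
      using a unfolding xs \<alpha>_def by (simp add: field_simps power2_eq_square)
    finally show ?thesis .
  qed
  define Qx where "Qx = x \<bullet> B x + (y \<bullet> x)^2/r - (s \<bullet> B x)^2/a"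
  have Qz: "Qx = z \<bullet> B z + (y \<bullet> x)^2/r" unfolding Qx_def zBz by simp
  have zpos: "(norm z)^2 / h \<le> z \<bullet> B z" using lb[of z] h by (simp add: field_simps)
  have Q0: "0 \<le> Qx" unfolding Qz using psd[of z] r by simp
  have yx2: "(y \<bullet> x)^2 \<le> (norm y)^2 * (norm x)^2"
    using Cauchy_Schwarz_ineq[of y x] by (simp add: power2_norm_eq_inner)
  have sBx2: "0 \<le> (s \<bullet> B x)^2 / a" using a by simp
  have "(y \<bullet> x)^2 / r \<le> (norm y)^2 * (norm x)^2 / r"
    using yx2 r by (simp add: divide_right_mono)
  also have "\<dots> = ((norm y)^2 / r) * (norm x)^2" by simp
  also have "\<dots> \<le> \<kappa>2 * (norm x)^2" using Py by (intro mult_right_mono) auto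
  finally have yxb: "(y \<bullet> x)^2 / r \<le> \<kappa>2 * (norm x)^2" .
  show "x \<bullet> B x + (y \<bullet> x)^2/(y \<bullet> s) - (s \<bullet> B x)^2/(s \<bullet> B s) \<le> x \<bullet> B x + \<kappa>2 * (norm x)^2"
    using yxb sBx2 unfolding r_def a_def by linarith
  show "0 \<le> x \<bullet> B x + (y \<bullet> x)^2/(y \<bullet> s) - (s \<bullet> B x)^2/(s \<bullet> B s)"
    using Q0 unfolding Qx_def r_def a_def .
  define u where "u = (y \<bullet> x) / r"
  have xdec: "x = z + \<alpha> *\<^sub>R s" unfolding z_def by simp
  have yxd: "y \<bullet> x = \<alpha> * r + y \<bullet> z"
    by (subst xdec) (simp add: inner_add_right r_def)
  have \<alpha>u: "\<alpha> = u - (y \<bullet> z) / r" using r unfolding u_def yxd by (simp add: field_simps)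
  have yz: "\<bar>y \<bullet> z\<bar> \<le> norm y * norm z" by (rule Cauchy_Schwarz_ineq2)
  have "\<bar>\<alpha>\<bar> \<le> \<bar>u\<bar> + \<bar>(y \<bullet> z) / r\<bar>" unfolding \<alpha>u by (rule abs_triangle_ineq4)
  also have "\<dots> = \<bar>u\<bar> + \<bar>y \<bullet> z\<bar> / r" using r by simp
  also have "\<dots> \<le> \<bar>u\<bar> + norm y * norm z / r" using yz r by (simp add: divide_right_mono)
  finally have \<alpha>b: "\<bar>\<alpha>\<bar> \<le> \<bar>u\<bar> + norm y * norm z / r" .
  define q where "q = norm y * norm s / r"
  have q0: "q \<ge> 0" using r by (simp add: q_def)
  have "norm x \<le> norm z + \<bar>\<alpha>\<bar> * norm s"
    by (subst xdec) (metis norm_scaleR norm_triangle_ineq)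
  also have "\<dots> \<le> norm z + (\<bar>u\<bar> + norm y * norm z / r) * norm s"
    using \<alpha>b by (intro add_left_mono mult_right_mono) auto
  also have "\<dots> = \<bar>u\<bar> * norm s + (1 + q) * norm z"
    by (simp add: q_def algebra_simps)
  finally have nx: "norm x \<le> \<bar>u\<bar> * norm s + (1 + q) * norm z" .
  define P where "P = (norm s)^2 / r"
  define Q where "Q = (1 + q)^2 * h"
  have P: "P > 0" using ns r by (simp add: P_def)
  have Q: "Q > 0" using q0 h by (simp add: Q_def add_nonneg_pos)
  have "(norm x)^2 \<le> (\<bar>u\<bar> * norm s + (1 + q) * norm z)^2"
    using nx by (intro power_mono) auto
  also have "\<dots> \<le> (P + Q) * ((\<bar>u\<bar> * norm s)^2 / P + ((1 + q) * norm z)^2 / Q)"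
    by (rule cs_weighted[OF P Q])
  also have "(\<bar>u\<bar> * norm s)^2 / P = (y \<bullet> x)^2 / r"
    using ns r s0 unfolding P_def u_def by (simp add: field_simps power2_eq_square)
  also have "((1 + q) * norm z)^2 / Q = (norm z)^2 / h"
  proof -
    have "(1+q)^2 \<noteq> 0" using q0 by simp
    then show ?thesis unfolding Q_def power_mult_distrib by (rule mult_divide_mult_cancel_left)
  qed
  also have "(P + Q) * ((y \<bullet> x)^2 / r + (norm z)^2 / h) \<le> (P + Q) * Qx"
    using zpos P Q unfolding Qz by (intro mult_left_mono) auto
  also have "\<dots> \<le> (\<kappa>1 + (2 + 2*\<kappa>1*\<kappa>2)*h) * Qx"
  proof (intro mult_right_mono Q0)
    have q2: "q^2 \<le> \<kappa>1 * \<kappa>2"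
    proof -
      have "q^2 = ((norm s)^2 / r) * ((norm y)^2 / r)" by (simp add: q_def power2_eq_square field_simps)
      also have "\<dots> \<le> \<kappa>1 * \<kappa>2" using Ps Py r k1 by (intro mult_mono) auto
      finally show ?thesis .
    qed
    have "(1+q)^2 \<le> 2 + 2*q^2" proof -
      have "2 + 2*q^2 - (1+q)^2 = (1-q)^2" by (simp add: power2_eq_square algebra_simps)
      then show ?thesis using zero_le_power2[of "1-q"] by linarith
    qed
    also have "\<dots> \<le> 2 + 2*\<kappa>1*\<kappa>2" using q2 by simp
    finally have "Q \<le> (2 + 2*\<kappa>1*\<kappa>2)*h" unfolding Q_def using h by (simp add: mult_right_mono)
    then show "P + Q \<le> \<kappa>1 + (2 + 2*\<kappa>1*\<kappa>2)*h" using Ps unfolding P_def by linarith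
  qed
  finally show "(norm x)^2 \<le> (\<kappa>1 + (2 + 2*\<kappa>1*\<kappa>2)*h) * (x \<bullet> B x + (y \<bullet> x)^2/(y \<bullet> s) - (s \<bullet> B x)^2/(s \<bullet> B s))"
    unfolding Qx_def r_def a_def .
qed


lemma max_power:
  fixes a b :: real assumes "0 \<le> a" "0 \<le> b"
  shows "(max a b)^n = max (a^n) (b^n)"
proof (cases "a \<le> b")
  case True
  then have "a^n \<le> b^n" using assms by (intro power_mono) auto
  then show ?thesis using True by (simp add: max_def)
next
  case False
  then have "b^n \<le> a^n" using assms by (intro power_mono) auto
  then show ?thesis using False by (simp add: max_def)
qed

lemma quad_apply:
  assumes sym: "\<And>x w. blinfun_apply (bfgs_seq B0 s y j) x \<bullet> w = x \<bullet> blinfun_apply (bfgs_seq B0 s y j) w"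
  shows "x \<bullet> blinfun_apply (bfgs_seq B0 s y (Suc j)) x =
    x \<bullet> blinfun_apply (bfgs_seq B0 s y j) x + (y (Suc j) \<bullet> x)^2 / (y (Suc j) \<bullet> s (Suc j))
    - (s (Suc j) \<bullet> blinfun_apply (bfgs_seq B0 s y j) x)^2 / (s (Suc j) \<bullet> blinfun_apply (bfgs_seq B0 s y j) (s (Suc j)))"
proof -
  let ?B = "blinfun_apply (bfgs_seq B0 s y j)"
  have xs: "x \<bullet> ?B (s (Suc j)) = s (Suc j) \<bullet> ?B x" using sym[of x "s (Suc j)"] by (simp add: inner_commute)
  show ?thesis unfolding seq_apply
    by (simp add: inner_add_right inner_diff_right xs power2_eq_square inner_commute)
qed

lemma sym_step:
  assumes sym: "\<And>x w. blinfun_apply (bfgs_seq B0 s y j) x \<bullet> w = x \<bullet> blinfun_apply (bfgs_seq B0 s y j) w"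
  shows "blinfun_apply (bfgs_seq B0 s y (Suc j)) x \<bullet> w = x \<bullet> blinfun_apply (bfgs_seq B0 s y (Suc j)) w"
proof -
  let ?B = "blinfun_apply (bfgs_seq B0 s y j)"
  have xs: "x \<bullet> ?B (s (Suc j)) = s (Suc j) \<bullet> ?B x" using sym[of x "s (Suc j)"] by (simp add: inner_commute)
  have ws: "?B (s (Suc j)) \<bullet> w = s (Suc j) \<bullet> ?B w" using sym[of "s (Suc j)" w] by simp
  show ?thesis unfolding seq_apply
    by (simp add: inner_add_right inner_diff_right inner_add_left inner_diff_left xs ws sym inner_commute[of x "y (Suc j)"] mult_ac)
qed

theorem lemma4p1:
  fixes B0 :: "'a::{real_inner,complete_space} \<Rightarrow>\<^sub>L 'a"
    and s y :: "nat \<Rightarrow> 'a" and M :: nat and \<kappa>1 \<kappa>2 :: real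
  assumes "\<kappa>1 > 0" and "\<kappa>2 > 0"
    and "\<And>j. j \<in> {1..M} \<Longrightarrow> (y j \<bullet> s j) / (norm (s j))\<^sup>2 \<ge> 1 / \<kappa>1"
    and "\<And>j. j \<in> {1..M} \<Longrightarrow> (y j \<bullet> s j) / (norm (y j))\<^sup>2 \<ge> 1 / \<kappa>2"
    and "B0 \<in> Lplus"
  shows "bfgs_seq B0 s y M \<in> Lplus
    \<and> norm (bfgs_seq B0 s y M) \<le> norm B0 + real M * \<kappa>2
    \<and> norm (blinfun_inv (bfgs_seq B0 s y M))
        \<le> 5 ^ M * max 1 (norm (blinfun_inv B0)) * max 1 (max (\<kappa>1 ^ M) ((\<kappa>1 * \<kappa>2) ^ M))"
proof -
  note k1 = assms(1) and k2 = assms(2)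
  obtain c0 where sym0: "\<And>x w. B0 x \<bullet> w = x \<bullet> B0 w" and c0: "c0 > 0"
    and lb0: "\<And>x. x \<bullet> B0 x \<ge> c0 * (norm x)^2"
    using assms(5) unfolding Lplus_def by blast
  have lb0': "(norm x)^2 \<le> (1/c0) * (x \<bullet> B0 x)" for x
    using lb0[of x] c0 by (simp add: field_simps)
  have psd0: "0 \<le> x \<bullet> B0 x" for x
  proof -
    have "0 \<le> c0 * (norm x)^2" using c0 by simp
    then show ?thesis using lb0[of x] by linarith
  qed
  have inv0: "B0 o\<^sub>L blinfun_inv B0 = id_blinfun"
    using inv_lemma[OF sym0 lb0'] c0 by simp
  define h0 where "h0 = norm (blinfun_inv B0)"
  have h0b: "(norm x)^2 \<le> h0 * (x \<bullet> B0 x)" for x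
  proof (cases "x = 0")
    case True then show ?thesis by simp
  next
    case False
    define w where "w = blinfun_inv B0 x"
    have Bw: "B0 w = x" unfolding w_def using inv0
      by (metis blinfun_apply_blinfun_compose blinfun_apply_id_blinfun)
    have e1: "w \<bullet> B0 x = (norm x)^2" using sym0[of w x] Bw by (simp add: power2_norm_eq_inner)
    have "w \<bullet> B0 w \<le> norm w * norm x" using Bw norm_cauchy_schwarz[of w x] by simp
    also have "\<dots> \<le> h0 * norm x * norm x" unfolding w_def h0_def
      by (intro mult_right_mono norm_blinfun) auto
    finally have e2: "w \<bullet> B0 w \<le> h0 * (norm x)^2" by (simp add: power2_eq_square mult_ac)
    have "((norm x)^2)^2 \<le> (w \<bullet> B0 w) * (x \<bullet> B0 x)"
      using psd_cs[OF sym0 psd0, of w x] e1 by simp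
    also have "\<dots> \<le> (h0 * (norm x)^2) * (x \<bullet> B0 x)"
      using e2 psd0[of x] by (rule mult_right_mono)
    finally have fin: "(norm x)^2 * (norm x)^2 \<le> (norm x)^2 * (h0 * (x \<bullet> B0 x))"
      by (simp only: power2_eq_square mult_ac)
    have p: "0 < (norm x)^2" using False by simp
    show ?thesis using mult_le_cancel_left_pos[OF p] fin by blast
  qed
  define H0 where "H0 = max 1 h0"
  have H0b: "(norm x)^2 \<le> H0 * (x \<bullet> B0 x)" for x
  proof -
    have "h0 * (x \<bullet> B0 x) \<le> max 1 h0 * (x \<bullet> B0 x)" using psd0[of x] by (intro mult_right_mono) auto
    then show ?thesis using h0b[of x] unfolding H0_def by linarith
  qed
  have H01: "H0 \<ge> 1" unfolding H0_def by simp
  define m where "m = max 1 (max \<kappa>1 (\<kappa>1 * \<kappa>2))"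
  have m1: "m \<ge> 1" and mk1: "\<kappa>1 \<le> m" and mk12: "\<kappa>1 * \<kappa>2 \<le> m" unfolding m_def by auto
  let ?B = "\<lambda>j. bfgs_seq B0 s y j"
  have inv: "j \<le> M \<Longrightarrow> (\<forall>x w. ?B j x \<bullet> w = x \<bullet> ?B j w)
      \<and> (\<forall>x. 0 \<le> x \<bullet> ?B j x \<and> x \<bullet> ?B j x \<le> (norm B0 + real j * \<kappa>2) * (norm x)^2)
      \<and> (\<forall>x. (norm x)^2 \<le> (5^j * H0 * m^j) * (x \<bullet> ?B j x))" for j
  proof (induction j)
    case 0
    have "x \<bullet> B0 x \<le> norm B0 * (norm x)^2" for x
    proof -
      have "x \<bullet> B0 x \<le> norm x * norm (B0 x)" by (rule norm_cauchy_schwarz)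
      also have "\<dots> \<le> norm x * (norm B0 * norm x)" by (intro mult_left_mono norm_blinfun) auto
      finally show ?thesis by (simp add: power2_eq_square mult_ac)
    qed
    then show ?case using sym0 psd0 H0b by simp
  next
    case (Suc j)
    then have IH: "(\<forall>x w. ?B j x \<bullet> w = x \<bullet> ?B j w)
      \<and> (\<forall>x. 0 \<le> x \<bullet> ?B j x \<and> x \<bullet> ?B j x \<le> (norm B0 + real j * \<kappa>2) * (norm x)^2)
      \<and> (\<forall>x. (norm x)^2 \<le> (5^j * H0 * m^j) * (x \<bullet> ?B j x))" by simp
    have symj: "\<And>x w. ?B j x \<bullet> w = x \<bullet> ?B j w" using IH by blast
    have lbj: "\<And>x. (norm x)^2 \<le> (5^j * H0 * m^j) * (x \<bullet> ?B j x)" using IH by blast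
    have mj: "m^j \<ge> 1" using m1 by simp
    have h1: "5^j * H0 * m^j \<ge> 1"
    proof -
      have "(1::real) \<le> 5^j" by simp
      then have "1 * 1 \<le> 5^j * H0" using H01 by (intro mult_mono) auto
      then have "1 * 1 \<le> (5^j * H0) * m^j" using mj by (intro mult_mono) auto
      then show ?thesis by simp
    qed
    then have hpos: "5^j * H0 * m^j > 0" by simp
    have jm: "Suc j \<in> {1..M}" using Suc.prems by simp
    note st = step[OF k1 k2 assms(3)[OF jm] assms(4)[OF jm] symj lbj hpos]
    have symS: "\<forall>x w. ?B (Suc j) x \<bullet> w = x \<bullet> ?B (Suc j) w"
      using sym_step[OF symj] by blast
    have up: "\<forall>x. 0 \<le> x \<bullet> ?B (Suc j) x \<and> x \<bullet> ?B (Suc j) x \<le> (norm B0 + real (Suc j) * \<kappa>2) * (norm x)^2"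
    proof
      fix x
      have "x \<bullet> ?B (Suc j) x \<le> x \<bullet> ?B j x + \<kappa>2 * (norm x)^2"
        using st(1)[of x] unfolding quad_apply[OF symj] .
      also have "\<dots> \<le> (norm B0 + real j * \<kappa>2) * (norm x)^2 + \<kappa>2 * (norm x)^2"
        using IH by simp
      also have "\<dots> = (norm B0 + real (Suc j) * \<kappa>2) * (norm x)^2" by (simp add: algebra_simps)
      finally show "0 \<le> x \<bullet> ?B (Suc j) x \<and> x \<bullet> ?B (Suc j) x \<le> (norm B0 + real (Suc j) * \<kappa>2) * (norm x)^2"
        using st(2)[of x] unfolding quad_apply[OF symj] by simp
    qed
    have low: "\<forall>x. (norm x)^2 \<le> (5^(Suc j) * H0 * m^(Suc j)) * (x \<bullet> ?B (Suc j) x)"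
    proof
      fix x
      define h where "h = 5^j * H0 * m^j"
      have Q0: "0 \<le> x \<bullet> ?B (Suc j) x" using up by blast
      have "\<kappa>1 + (2 + 2*\<kappa>1*\<kappa>2)*h \<le> 5 * h * m"
      proof -
        have "m * 1 \<le> m * h" using h1 m1 unfolding h_def by (intro mult_left_mono) auto
        then have a1: "\<kappa>1 \<le> m * h" using mk1 by simp
        have hh: "h \<ge> 1" using h1 unfolding h_def .
        have "h*1 \<le> h*m" using hh m1 by (intro mult_left_mono) auto
        then have a2: "2*h \<le> 2*h*m" by simp
        have "(\<kappa>1*\<kappa>2)*h \<le> m*h" using mk12 hh by (intro mult_right_mono) auto
        then have a3: "2*\<kappa>1*\<kappa>2*h \<le> 2*m*h" by simp
        show ?thesis using a1 a2 a3 by (simp add: algebra_simps)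
      qed
      then have "(\<kappa>1 + (2 + 2*\<kappa>1*\<kappa>2)*h) * (x \<bullet> ?B (Suc j) x) \<le> (5 * h * m) * (x \<bullet> ?B (Suc j) x)"
        using Q0 by (rule mult_right_mono)
      moreover have "(norm x)^2 \<le> (\<kappa>1 + (2 + 2*\<kappa>1*\<kappa>2)*h) * (x \<bullet> ?B (Suc j) x)"
        using st(3)[of x] unfolding quad_apply[OF symj] h_def .
      moreover have "5 * h * m = 5^(Suc j) * H0 * m^(Suc j)" by (simp add: h_def mult_ac)
      ultimately show "(norm x)^2 \<le> (5^(Suc j) * H0 * m^(Suc j)) * (x \<bullet> ?B (Suc j) x)" by simp
    qed
    show ?case using symS up low by blast
  qed
  from inv[of M] have symM: "\<And>x w. ?B M x \<bullet> w = x \<bullet> ?B M w"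
    and psdM: "\<And>x. 0 \<le> x \<bullet> ?B M x"
    and upM: "\<And>x. x \<bullet> ?B M x \<le> (norm B0 + real M * \<kappa>2) * (norm x)^2"
    and lbM: "\<And>x. (norm x)^2 \<le> (5^M * H0 * m^M) * (x \<bullet> ?B M x)" by auto
  have HM: "5^M * H0 * m^M > 0" using H01 m1 by simp
  have L: "?B M \<in> Lplus"
    unfolding Lplus_def
  proof (intro CollectI conjI exI[of _ "1 / (5^M * H0 * m^M)"] allI symM)
    show "0 < 1 / (5^M * H0 * m^M)" using HM by simp
    fix x show "1 / (5^M * H0 * m^M) * (norm x)^2 \<le> x \<bullet> ?B M x"
      using lbM[of x] HM by (simp add: field_simps)
  qed
  have N: "norm (?B M) \<le> norm B0 + real M * \<kappa>2"
    using k2 by (intro psd_norm_bound[OF symM psdM upM]) auto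
  have I: "norm (blinfun_inv (?B M)) \<le> 5^M * H0 * m^M"
    using inv_lemma[OF symM lbM HM] by blast
  have mM: "m^M = max 1 (max (\<kappa>1 ^ M) ((\<kappa>1 * \<kappa>2) ^ M))"
    unfolding m_def using k1 k2 by (simp add: max_power)
  show ?thesis using L N I unfolding mM H0_def h0_def by simp
qed

end
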